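(* Let $k\ge1$ and let $m>3$ be a vertex of the finite tree $\mathcal{T}_{2,3}^k$. Then the number of children of $m$ in $\mathcal{T}_{2,3}^k$ equals $$\sum_{j=0}^{\lfloor m/4\rfloor}\binom{k}{j}\binom{k-j}{m-4j}.$$
   Context: For integers $b>1$, $e>1$ and a positive integer $n=\sum_{i=0}^{r} d_i b^i$ written in base $b$ (digits $0\le d_i\le b-1$), the $e$-power base-$b$ happy function is $S_{e,b}(n)=\sum_{i=0}^{r} d_i^e$. A positive integer $n$ is $e$-power $b$-happy if $S_{e,b}^{\ell}(n)=1$ for some $\ell\ge 1$. The tree $\mathcal{T}_{e,b}$ has as vertices all $e$-power $b$-happy numbers, with root $1$; a happy number $n\neq 1$ is a child of the vertex $S_{e,b}(n)$. For $k\ge1$, $\mathcal{T}_{e,b}^k$ is the subtree on the happy numbers having at most $k$ digits in base $b$ (i.e. $n<b^k$); thus the children of a vertex $m$ in $\mathcal{T}_{e,b}^k$ are the happy integers $n$ with $1\le n<b^k$, $n\neq1$, and $S_{e,b}(n)=m$. Binomial coefficients $\binom{a}{c}$ are taken to be $0$ when $c<0$ or $c>a$ (including when $a<0$). *)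

theory Defs
  imports Main
begin

text \<open>Digit i of n is (n div b^i) mod b; digits with index beyond the length are 0,
  so summing over i < n+1 covers all digits when b > 1.\<close>
definition happyS :: "nat \<Rightarrow> nat \<Rightarrow> nat \<Rightarrow> nat" where
  "happyS e b n = (\<Sum>i<Suc n. ((n div b ^ i) mod b) ^ e)"

definition is_happy :: "nat \<Rightarrow> nat \<Rightarrow> nat \<Rightarrow> bool" where
  "is_happy e b n \<longleftrightarrow> n > 0 \<and> (\<exists>l\<ge>1. (happyS e b ^^ l) n = 1)"

definition tree_vertex :: "nat \<Rightarrow> nat \<Rightarrow> nat \<Rightarrow> nat \<Rightarrow> bool" where
  "tree_vertex e b k m \<longleftrightarrow> is_happy e b m \<and> m < b ^ k"

definition tree_children :: "nat \<Rightarrow> nat \<Rightarrow> nat \<Rightarrow> nat \<Rightarrow> nat set" where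
  "tree_children e b k m = {n. 1 \<le> n \<and> n < b ^ k \<and> n \<noteq> 1 \<and> is_happy e b n \<and> happyS e b n = m}"

end

theory Submission
  imports Defs
begin

fun c2 :: "nat \<Rightarrow> nat \<Rightarrow> nat" where
  "c2 0 n = 0"
| "c2 (Suc k) n = (if n mod 3 = 2 then 1 else 0) + c2 k (n div 3)"

fun c1 :: "nat \<Rightarrow> nat \<Rightarrow> nat" where
  "c1 0 n = 0"
| "c1 (Suc k) n = (if n mod 3 = 1 then 1 else 0) + c1 k (n div 3)"

definition Tq :: "nat \<Rightarrow> nat \<Rightarrow> nat" where
  "Tq k n = (\<Sum>i<k. ((n div 3 ^ i) mod 3) ^ 2)"

lemma T_Suc: "Tq (Suc k) n = (n mod 3)^2 + Tq k (n div 3)"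
  unfolding Tq_def sum.lessThan_Suc_shift
  by (simp add: div_mult2_eq)

lemma mod3_cases: "(n::nat) mod 3 = 0 \<or> n mod 3 = 1 \<or> n mod 3 = 2" by arith

lemma T_c: "Tq k n = c1 k n + 4 * c2 k n"
proof (induction k arbitrary: n)
  case 0 then show ?case by (simp add: Tq_def)
next
  case (Suc k)
  show ?case using mod3_cases[of n] by (auto simp: T_Suc Suc)
qed

lemma sum3: "(\<Sum>n<3*(N::nat). (f::nat\<Rightarrow>nat) n) = (\<Sum>q<N. f (3*q) + f (3*q+1) + f (3*q+2))"
proof (induction N)
  case 0 then show ?case by simp
next
  case (Suc N)
  have e: "3*Suc N = Suc (Suc (Suc (3*N)))" by simp
  have "(\<Sum>n<3*Suc N. f n) = (\<Sum>n<3*N. f n) + f (3*N) + f (3*N+1) + f (3*N+2)"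
    unfolding e by (subst sum.lessThan_Suc, subst sum.lessThan_Suc, subst sum.lessThan_Suc) simp
  then show ?case using Suc by simp
qed

definition H :: "nat \<Rightarrow> nat \<Rightarrow> nat \<Rightarrow> nat" where
  "H k j i = (\<Sum>q<3^k. if c2 k q = j \<and> c1 k q = i then 1 else 0)"

lemma H_Suc: "H (Suc k) j i = H k j i + (if i \<ge> 1 then H k j (i-1) else 0)
   + (if j \<ge> 1 then H k (j-1) i else 0)"
proof -
  have "H (Suc k) j i = (\<Sum>q<3^k. (if c2 k q = j \<and> c1 k q = i then 1 else 0)
     + (if c2 k q = j \<and> Suc (c1 k q) = i then 1 else 0)
     + (if Suc (c2 k q) = j \<and> c1 k q = i then 1 else 0))"
  proof -
    have d: "\<And>q::nat. (3*q+1) div 3 = q" "\<And>q::nat. Suc (3*q) div 3 = q" "\<And>q::nat. (3*q+2) div 3 = q"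
      "\<And>q::nat. (3*q+1) mod 3 = 1" "\<And>q::nat. (3*q+2) mod 3 = 2" by presburger+
    show ?thesis unfolding H_def by (simp add: sum3 d del: add_2_eq_Suc add_2_eq_Suc')
  qed
  also have "\<dots> = H k j i + (\<Sum>q<3^k. (if c2 k q = j \<and> Suc (c1 k q) = i then 1 else 0))
     + (\<Sum>q<3^k. (if Suc (c2 k q) = j \<and> c1 k q = i then 1 else 0))"
    unfolding H_def by (simp add: sum.distrib)
  also have "(\<Sum>q<3^k. (if c2 k q = j \<and> Suc (c1 k q) = i then 1 else 0)) =
     (if i \<ge> 1 then H k j (i-1) else 0)"
    unfolding H_def by (cases i) auto
  also have "(\<Sum>q<3^k. (if Suc (c2 k q) = j \<and> c1 k q = i then 1 else 0)) =
     (if j \<ge> 1 then H k (j-1) i else 0)"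
    unfolding H_def by (cases j) auto
  finally show ?thesis .
qed

lemma binom_id: "(Suc k choose j) * (Suc k - j choose i) =
   (k choose j) * (k - j choose i) + (if i \<ge> 1 then (k choose j) * (k - j choose (i-1)) else 0)
   + (if j \<ge> 1 then (k choose (j-1)) * (Suc k - j choose i) else 0)"
proof (cases j)
  case 0
  then show ?thesis by (cases i) auto
next
  case (Suc j')
  show ?thesis
  proof (cases "j \<le> k")
    case True
    then obtain r where r: "k - j' = Suc r" "Suc k - j = Suc r" "k - j = r" using Suc
      by (metis Suc_diff_le Suc_le_lessD diff_Suc_Suc less_eq_Suc_le)
    show ?thesis
    proof (cases i)
      case 0 then show ?thesis using Suc r by simp
    next
      case (Suc i')
      then show ?thesis using \<open>j = Suc j'\<close> r by (simp add: algebra_simps)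
    qed
  next
    case False
    then have "k choose j = 0" by simp
    then show ?thesis using Suc False by (cases i) auto
  qed
qed

lemma H_binom: "H k j i = (k choose j) * ((k - j) choose i)"
proof (induction k arbitrary: j i)
  case 0
  show ?case unfolding H_def by auto
next
  case (Suc k)
  show ?case unfolding H_Suc Suc binom_id
    by (cases j; cases i) auto
qed

lemma sum_eq_zero_tail:
  fixes a b :: nat
  assumes "\<forall>i\<ge>a. f i = (0::nat)" "\<forall>i\<ge>b. f i = 0"
  shows "sum f {..<a} = sum f {..<b}"
proof -
  have "sum f {..<a} = sum f {..<max a b}"
  proof (rule sum.mono_neutral_left)
    show "\<forall>i\<in>{..<max a b} - {..<a}. f i = 0"
    proof
      fix i assume "i \<in> {..<max a b} - {..<a}"
      then have "i \<ge> a" by auto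
      then show "f i = 0" using assms by simp
    qed
  qed auto
  moreover have "sum f {..<b} = sum f {..<max a b}"
  proof (rule sum.mono_neutral_left)
    show "\<forall>i\<in>{..<max a b} - {..<b}. f i = 0"
    proof
      fix i assume "i \<in> {..<max a b} - {..<b}"
      then have "i \<ge> b" by auto
      then show "f i = 0" using assms by simp
    qed
  qed auto
  ultimately show ?thesis by simp
qed

lemma happyS_T: assumes "n < 3^k" shows "happyS 2 3 n = Tq k n"
  unfolding happyS_def Tq_def
proof (rule sum_eq_zero_tail)
  show "\<forall>i\<ge>Suc n. ((n div 3 ^ i) mod 3) ^ 2 = (0::nat)"
  proof (intro allI impI)
    fix i assume "Suc n \<le> i"
    have "n < 3 ^ n" by (induction n) auto
    also have "\<dots> \<le> 3 ^ i" using \<open>Suc n \<le> i\<close> by (intro power_increasing) auto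
    finally show "((n div 3 ^ i) mod 3) ^ 2 = (0::nat)" by simp
  qed
  show "\<forall>i\<ge>k. ((n div 3 ^ i) mod 3) ^ 2 = (0::nat)"
  proof (intro allI impI)
    fix i assume "k \<le> i"
    have "n < 3 ^ i" using assms power_increasing[OF \<open>k \<le> i\<close>, of "3::nat"] by linarith
    then show "((n div 3 ^ i) mod 3) ^ 2 = (0::nat)" by simp
  qed
qed

theorem mainTheorem3:
  fixes k m :: nat
  assumes "k \<ge> 1" and "tree_vertex 2 3 k m" and "m > 3"
  shows "card (tree_children 2 3 k m) =
    (\<Sum>j=0..m div 4. (k choose j) * ((k - j) choose (m - 4 * j)))"
proof -
  from assms(2) obtain l where l: "l \<ge> 1" "(happyS 2 3 ^^ l) m = 1"
    unfolding tree_vertex_def is_happy_def by auto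
  have S0: "happyS 2 3 0 = 0" by (simp add: happyS_def)
  have S1: "happyS 2 3 1 = 1" by (simp add: happyS_def)
  have eq: "tree_children 2 3 k m = {n \<in> {..<3^k}. Tq k n = m}"
  proof (intro set_eqI iffI)
    fix n assume "n \<in> tree_children 2 3 k m"
    then show "n \<in> {n \<in> {..<3^k}. Tq k n = m}"
      unfolding tree_children_def using happyS_T by auto
  next
    fix n assume "n \<in> {n \<in> {..<3^k}. Tq k n = m}"
    then have n: "n < 3^k" "happyS 2 3 n = m" using happyS_T by auto
    have "n \<noteq> 0"
    proof
      assume "n = 0" then have "m = 0" using n S0 by simp
      then show False using assms(3) by simp
    qed
    moreover have "n \<noteq> 1" using n S1 assms(3) by auto
    moreover have "(happyS 2 3 ^^ Suc l) n = 1"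
      using l n by (simp add: funpow_Suc_right del: funpow.simps)
    ultimately have "is_happy 2 3 n"
      unfolding is_happy_def by (intro conjI exI[of _ "Suc l"]) auto
    then show "n \<in> tree_children 2 3 k m"
      unfolding tree_children_def using n \<open>n \<noteq> 0\<close> \<open>n \<noteq> 1\<close> by auto
  qed
  have "card (tree_children 2 3 k m) = (\<Sum>n<3^k. if Tq k n = m then 1 else 0)"
    unfolding eq by (simp add: sum.inter_filter[symmetric])
  also have "\<dots> = (\<Sum>n<3^k. \<Sum>j=0..m div 4. if c2 k n = j \<and> c1 k n = m - 4*j then 1 else 0)"
  proof (rule sum.cong[OF refl])
    fix n
    let ?a = "c2 k n" and ?b = "c1 k n"
    have "(\<Sum>j=0..m div 4. if ?a = j \<and> ?b = m - 4*j then 1 else 0) =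
          (\<Sum>j=0..m div 4. if ?a = j then (if ?b = m - 4 * ?a then 1 else 0) else (0::nat))"
      by (rule sum.cong) auto
    also have "\<dots> = (if ?a \<in> {0..m div 4} then (if ?b = m - 4 * ?a then 1 else 0) else 0)"
      by (subst sum.delta') simp_all
    also have "\<dots> = (if Tq k n = m then 1 else 0)"
      unfolding T_c by auto
    finally show "(if Tq k n = m then 1 else 0) =
        (\<Sum>j=0..m div 4. if ?a = j \<and> ?b = m - 4*j then 1 else (0::nat))" by simp
  qed
  also have "\<dots> = (\<Sum>j=0..m div 4. H k j (m - 4*j))"
    unfolding H_def by (rule sum.swap)
  also have "\<dots> = (\<Sum>j=0..m div 4. (k choose j) * ((k - j) choose (m - 4 * j)))"
    by (simp add: H_binom)
  finally show ?thesis .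
qed

end
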